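(* For every $\lambda\in\mathbb C$, every $g\in SL_2(\Gamma_n)$ and every function $f:E^n\to\Sigma$, \[E_1\,\big(\pi'_\lambda(g)f\big)=\pi_\lambda(g)\big(E_1 f\big),\] where $E_1f$ denotes the function $x\mapsto E_1f(x)$.
   Context: Let $n\ge 2$, let $E^n=\mathbb R^n$ with orthonormal basis $e_1,\dots,e_n$ and $E^{n-1}=\mathrm{span}(e_2,\dots,e_n)$. Let $Cl_{n-1}$ be the real Clifford algebra generated by $E^{n-1}$ with relations $uv+vu=-2(u,v)$; identify $E^n$ with $\mathbb R\oplus E^{n-1}\subset Cl_{n-1}$, $e_1\leftrightarrow1$. Let $a\mapsto a'$ be the principal automorphism ($e_j\mapsto-e_j$, $j\ge 2$), $a\mapsto a^*$ the reversion (anti-automorphism fixing each $e_j$), and $|\cdot|$ the canonical norm of $Cl_{n-1}$. The Clifford group $\Gamma_n$ is the set of finite products of nonzero vectors. A Clifford matrix is $\begin{pmatrix} a&b\\ c&d\end{pmatrix}$ with $a,b,c,d\in\Gamma_n\cup\{0\}$, $ad^*-bc^*=1$, $ab^*\in E^n$, $cd^*\in E^n$; they form a group $SL_2(\Gamma_n)$, and $d^*-b^*x\in\Gamma_n\cup\{0\}$ for $x\in E^n$. Let $\Sigma$ be a finite-dimensional complex Hilbert space with skew-Hermitian operators $E_1,\dots,E_n$ satisfying $E_iE_j+E_jE_i=-2\delta_{ij}\mathrm{Id}$; let $\tau:Cl_{n-1}\to\mathrm{End}(\Sigma)$ be the unital algebra homomorphism with $\tau(e_j)=E_1E_j$ ($2\le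 j\le n$), and $\tau'(a)=\tau(a')$. For $\lambda\in\mathbb C$ and $g=\begin{pmatrix} a&b\\ c&d\end{pmatrix}\in SL_2(\Gamma_n)$ define, for $x$ with $d^*-b^*x\ne0$, $\pi_\lambda(g)f(x)=|d^*-b^*x|^{-2\lambda-n}\,\tau\big(\tfrac{d^*-b^*x}{|d^*-b^*x|}\big)^{-1}f\big((-c^*+a^*x)(d^*-b^*x)^{-1}\big)$, and $\pi'_\lambda(g)$ by the same formula with $\tau$ replaced by $\tau'$. *)

theory Defs
  imports "HOL-Analysis.Analysis"
begin

text \<open>A multivector is represented by its coefficients with respect to the basis
 e_A = e_{a1} ... e_{ak} (a1 < ... < ak), A a subset of {2..n}.  Only multivectors
 whose coefficients vanish outside Pow {2..n} are genuine elements of Cl_{n-1}.\<close>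

type_synonym mv = "nat set \<Rightarrow> real"

definition CL :: "nat \<Rightarrow> mv set" where
  "CL n = {a. \<forall>A. \<not> A \<subseteq> {2..n} \<longrightarrow> a A = 0}"

text \<open>Sign of e_A e_B = sign * e_(A symmetric difference B), using e_j^2 = -1.\<close>
definition blade_sign :: "nat set \<Rightarrow> nat set \<Rightarrow> real" where
  "blade_sign A B = (-1) ^ card {(i, j). i \<in> A \<and> j \<in> B \<and> j < i} * (-1) ^ card (A \<inter> B)"

definition cl_mult :: "nat \<Rightarrow> mv \<Rightarrow> mv \<Rightarrow> mv" where
  "cl_mult n a b = (\<lambda>C. \<Sum>A\<in>Pow {2..n}. \<Sum>B\<in>Pow {2..n}.
      if (A - B) \<union> (B - A) = C then blade_sign A B * a A * b B else 0)"

definition cl_scalar :: "real \<Rightarrow> mv" where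
  "cl_scalar r = (\<lambda>A. if A = {} then r else 0)"

definition cl_one :: mv where "cl_one = cl_scalar 1"

definition cl_add :: "mv \<Rightarrow> mv \<Rightarrow> mv" where "cl_add a b = (\<lambda>A. a A + b A)"
definition cl_sub :: "mv \<Rightarrow> mv \<Rightarrow> mv" where "cl_sub a b = (\<lambda>A. a A - b A)"
definition cl_neg :: "mv \<Rightarrow> mv" where "cl_neg a = (\<lambda>A. - a A)"
definition cl_scale :: "real \<Rightarrow> mv \<Rightarrow> mv" where "cl_scale r a = (\<lambda>A. r * a A)"

text \<open>Principal automorphism a \<mapsto> a' (e_j \<mapsto> -e_j).\<close>
definition cl_prin :: "mv \<Rightarrow> mv" where
  "cl_prin a = (\<lambda>A. (-1) ^ card A * a A)"

text \<open>Reversion a \<mapsto> a^* (anti-automorphism fixing each e_j).\<close>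
definition cl_rev :: "mv \<Rightarrow> mv" where
  "cl_rev a = (\<lambda>A. (-1) ^ (card A * (card A - 1) div 2) * a A)"

definition cl_norm :: "nat \<Rightarrow> mv \<Rightarrow> real" where
  "cl_norm n a = sqrt (\<Sum>A\<in>Pow {2..n}. (a A)^2)"

definition cl_inv :: "nat \<Rightarrow> mv \<Rightarrow> mv" where
  "cl_inv n a = (THE b. b \<in> CL n \<and> cl_mult n a b = cl_one \<and> cl_mult n b a = cl_one)"

text \<open>E^n = R \<oplus> E^{n-1}, with e_1 identified with 1.\<close>
definition vecs :: "nat \<Rightarrow> mv set" where
  "vecs n = {x. \<forall>A. x A \<noteq> 0 \<longrightarrow> A = {} \<or> (\<exists>j\<in>{2..n}. A = {j})}"

definition clifford_group :: "nat \<Rightarrow> mv set" where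
  "clifford_group n = {foldr (cl_mult n) vs cl_one | vs.
      vs \<noteq> [] \<and> (\<forall>v\<in>set vs. v \<in> vecs n \<and> v \<noteq> (\<lambda>_. 0))}"

text \<open>Clifford matrices (a, b, c, d) = [[a, b], [c, d]].\<close>
definition SL2_Gamma :: "nat \<Rightarrow> (mv \<times> mv \<times> mv \<times> mv) set" where
  "SL2_Gamma n = {(a, b, c, d).
      {a, b, c, d} \<subseteq> clifford_group n \<union> {\<lambda>_. 0} \<and>
      cl_sub (cl_mult n a (cl_rev d)) (cl_mult n b (cl_rev c)) = cl_one \<and>
      cl_mult n a (cl_rev b) \<in> vecs n \<and>
      cl_mult n c (cl_rev d) \<in> vecs n}"

definition cadj :: "complex^'m^'m \<Rightarrow> complex^'m^'m" where
  "cadj M = (\<chi> i j. cnj (M $ j $ i))"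

text \<open>The unital algebra homomorphism tau with tau(e_j) = E_1 E_j, written out on the basis
 e_A = e_{a1}...e_{ak} (a1 < ... < ak).\<close>
definition tau :: "nat \<Rightarrow> (nat \<Rightarrow> complex^'m^'m) \<Rightarrow> mv \<Rightarrow> complex^'m^'m" where
  "tau n E a = (\<Sum>A\<in>Pow {2..n}. mat (complex_of_real (a A)) **
      foldr (\<lambda>j M. (E 1 ** E j) ** M) (sorted_list_of_set A) (mat 1))"

definition tau' :: "nat \<Rightarrow> (nat \<Rightarrow> complex^'m^'m) \<Rightarrow> mv \<Rightarrow> complex^'m^'m" where
  "tau' n E a = tau n E (cl_prin a)"

text \<open>Generic formula, parametrised by the map t (tau or tau').  Where d^* - b^* x = 0 the
 formula is undefined; we put the value 0 there.\<close>
definition pi_gen :: "nat \<Rightarrow> (mv \<Rightarrow> complex^'m^'m) \<Rightarrow> complex \<Rightarrow> mv \<times> mv \<times> mv \<times> mv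
     \<Rightarrow> (mv \<Rightarrow> complex^'m) \<Rightarrow> mv \<Rightarrow> complex^'m" where
  "pi_gen n t lam g f x = (case g of (a, b, c, d) \<Rightarrow>
     let w = cl_sub (cl_rev d) (cl_mult n (cl_rev b) x) in
     if w = (\<lambda>_. 0) then 0 else
       (complex_of_real (cl_norm n w) powr (- 2 * lam - of_nat n)) *s
       (matrix_inv (t (cl_scale (1 / cl_norm n w) w)) *v
         f (cl_mult n (cl_add (cl_neg (cl_rev c)) (cl_mult n (cl_rev a) x)) (cl_inv n w))))"

definition pi_rep :: "nat \<Rightarrow> (nat \<Rightarrow> complex^'m^'m) \<Rightarrow> complex \<Rightarrow> mv \<times> mv \<times> mv \<times> mv
     \<Rightarrow> (mv \<Rightarrow> complex^'m) \<Rightarrow> mv \<Rightarrow> complex^'m" where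
  "pi_rep n E = pi_gen n (tau n E)"

definition pi'_rep :: "nat \<Rightarrow> (nat \<Rightarrow> complex^'m^'m) \<Rightarrow> complex \<Rightarrow> mv \<times> mv \<times> mv \<times> mv
     \<Rightarrow> (mv \<Rightarrow> complex^'m) \<Rightarrow> mv \<Rightarrow> complex^'m" where
  "pi'_rep n E = pi_gen n (tau' n E)"

end

theory Submission
  imports Defs
begin

section \<open>Square matrices as a ring\<close>

typedef ('m::finite) sqm = "UNIV :: (complex^'m^'m) set"
  morphisms rep abs by auto

setup_lifting type_definition_sqm

instantiation sqm :: (finite) ring_1
begin
lift_definition zero_sqm :: "'a sqm" is "0" .
lift_definition one_sqm :: "'a sqm" is "mat 1" .
lift_definition plus_sqm :: "'a sqm \<Rightarrow> 'a sqm \<Rightarrow> 'a sqm" is "(+)" .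
lift_definition minus_sqm :: "'a sqm \<Rightarrow> 'a sqm \<Rightarrow> 'a sqm" is "(-)" .
lift_definition uminus_sqm :: "'a sqm \<Rightarrow> 'a sqm" is "uminus" .
lift_definition times_sqm :: "'a sqm \<Rightarrow> 'a sqm \<Rightarrow> 'a sqm" is "(**)" .
instance
proof
  fix a b c :: "'a sqm"
  show "a * b * c = a * (b * c)" by transfer (simp add: matrix_mul_assoc)
  show "1 * a = a" by transfer simp
  show "a * 1 = a" by transfer simp
  show "(a + b) * c = a * c + b * c"
    by transfer (simp add: matrix_matrix_mult_def vec_eq_iff sum.distrib distrib_right)
  show "a * (b + c) = a * b + a * c" by transfer (simp add: matrix_add_ldistrib)
  show "a + b + c = a + (b + c)" by transfer (simp add: add.assoc)
  show "a + b = b + a" by transfer (simp add: add.commute)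
  show "0 + a = a" by transfer simp
  show "- a + a = 0" by transfer simp
  show "a - b = a + - b" by transfer simp
  have "rep (0::'a sqm) $ undefined $ undefined \<noteq> rep (1::'a sqm) $ undefined $ undefined"
    by (simp add: zero_sqm.rep_eq one_sqm.rep_eq mat_def)
  then show "(0::'a sqm) \<noteq> 1" by auto
qed
end

instantiation sqm :: (finite) real_algebra_1
begin
lift_definition scaleR_sqm :: "real \<Rightarrow> 'a sqm \<Rightarrow> 'a sqm" is "scaleR" .
instance
proof
  fix a b :: real and x y :: "'a sqm"
  show "a *\<^sub>R (x + y) = a *\<^sub>R x + a *\<^sub>R y" by transfer (simp add: scaleR_add_right)
  show "(a + b) *\<^sub>R x = a *\<^sub>R x + b *\<^sub>R x" by transfer (simp add: scaleR_add_left)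
  show "a *\<^sub>R b *\<^sub>R x = (a * b) *\<^sub>R x" by transfer simp
  show "1 *\<^sub>R x = x" by transfer simp
  show "a *\<^sub>R x * y = a *\<^sub>R (x * y)" by transfer (simp add: scalar_matrix_assoc)
  show "x * a *\<^sub>R y = a *\<^sub>R (x * y)" by transfer (simp add: matrix_scalar_ac scalar_matrix_assoc)
qed
end

lemma rep_mult: "rep (x * y) = rep x ** rep y" by transfer simp
lemma rep_add: "rep (x + y) = rep x + rep y" by transfer simp
lemma rep_one: "rep 1 = mat 1" by transfer simp
lemma rep_zero: "rep 0 = 0" by transfer simp
lemma rep_scaleR: "rep (r *\<^sub>R x) = r *\<^sub>R rep x" by transfer simp
lemma rep_sum: "finite S \<Longrightarrow> rep (sum f S) = sum (\<lambda>i. rep (f i)) S"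
  by (induction S rule: finite_induct) (simp_all add: rep_add rep_zero)

lemma scaleR_if0: "(if P then x else 0) *\<^sub>R (Y::'a::real_vector) = (if P then x *\<^sub>R Y else 0)"
  by simp

lemma cnj_sum': "cnj (sum f S) = sum (\<lambda>i. cnj (f i)) S"
  by (induction S rule: infinite_finite_induct) auto

lift_definition ccadj :: "'a::finite sqm \<Rightarrow> 'a sqm" is cadj .
lift_definition tr :: "'a::finite sqm \<Rightarrow> complex" is trace .

lemma ccadj_mult: "ccadj (x * y) = ccadj y * ccadj x"
  by transfer (simp add: cadj_def matrix_matrix_mult_def vec_eq_iff cnj_sum' mult.commute)
lemma ccadj_add: "ccadj (x + y) = ccadj x + ccadj y"
  by transfer (simp add: cadj_def vec_eq_iff)
lemma ccadj_minus: "ccadj (- x) = - ccadj x"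
  by transfer (simp add: cadj_def vec_eq_iff)
lemma ccadj_diff: "ccadj (x - y) = ccadj x - ccadj y"
  by transfer (simp add: cadj_def vec_eq_iff)
lemma ccadj_one: "ccadj 1 = 1"
  by transfer (simp add: cadj_def vec_eq_iff mat_def)
lemma ccadj_zero: "ccadj 0 = 0"
  by transfer (simp add: cadj_def vec_eq_iff)
lemma ccadj_scaleR: "ccadj (r *\<^sub>R x) = r *\<^sub>R ccadj x"
  by transfer (simp add: cadj_def vec_eq_iff)
lemma ccadj_ccadj: "ccadj (ccadj x) = x"
  by transfer (simp add: cadj_def vec_eq_iff)

lemma tr_mult: "tr (x * y) = tr (y * x)"
  by transfer (rule trace_mul_sym)
lemma tr_add: "tr (x + y) = tr x + tr y"
  by transfer (rule trace_add)
lemma tr_minus: "tr (- x) = - tr x"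
  by transfer (simp add: trace_def sum_negf)
lemma tr_scaleR: "tr (r *\<^sub>R x) = of_real r * tr x"
  by transfer (simp add: trace_def scaleR_sum_right[symmetric], simp add: scaleR_conv_of_real)
lemma tr_one: "tr (1::'a::finite sqm) = of_nat CARD('a)"
  by transfer (rule trace_I)
lemma tr_sum: "finite S \<Longrightarrow> tr (sum f S) = (\<Sum>i\<in>S. tr (f i))"
  by (induction S rule: finite_induct) (simp_all add: tr_add, transfer, simp add: trace_def)

lemma half_eq: fixes y :: "'a::real_algebra_1" shows "y + y = -2 \<Longrightarrow> y = -1"
proof -
  assume a: "y + y = -2"
  have "y = (1/2::real) *\<^sub>R y + (1/2::real) *\<^sub>R y" by (simp add: scaleR_add_left[symmetric])
  also have "\<dots> = (1/2::real) *\<^sub>R (y + y)" by (simp add: scaleR_add_right)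
  also have "\<dots> = (1/2::real) *\<^sub>R (of_real (-2))" using a by simp
  also have "\<dots> = of_real ((1/2) * (-2))" by (simp only: scaleR_conv_of_real of_real_mult)
  also have "\<dots> = -1" by simp
  finally show "y = -1" .
qed

section \<open>Signs\<close>

abbreviation sd :: "'a set \<Rightarrow> 'a set \<Rightarrow> 'a set" where "sd A B \<equiv> (A - B) \<union> (B - A)"

definition prs :: "nat set \<Rightarrow> nat set \<Rightarrow> (nat \<times> nat) set" where
  "prs A B = {(i, j). i \<in> A \<and> j \<in> B \<and> j < i}"

lemma bs_def': "blade_sign A B = (-1) ^ card (prs A B) * (-1) ^ card (A \<inter> B)"
  by (simp add: blade_sign_def prs_def)

lemma finite_prs: "finite A \<Longrightarrow> finite B \<Longrightarrow> finite (prs A B)"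
  by (rule finite_subset[of _ "A \<times> B"]) (auto simp: prs_def)

lemma parity_sd: assumes "finite X" "finite Y"
  shows "(-1::real) ^ card ((X - Y) \<union> (Y - X)) = (-1) ^ card X * (-1) ^ card Y"
proof -
  have c1: "card X = card (X \<inter> Y) + card (X - Y)" using card_Int_Diff[OF assms(1)] .
  have c2: "card Y = card (X \<inter> Y) + card (Y - X)" using card_Int_Diff[OF assms(2), of X] by (simp add: Int_commute)
  have c3: "card ((X - Y) \<union> (Y - X)) = card (X - Y) + card (Y - X)"
    by (rule card_Un_disjoint) (use assms in auto)
  have "card X + card Y = card ((X - Y) \<union> (Y - X)) + 2 * card (X \<inter> Y)" using c1 c2 c3 by simp
  then have "(-1::real) ^ (card X + card Y) = (-1) ^ card ((X - Y) \<union> (Y - X))"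
    by (simp add: power_add power_mult)
  then show ?thesis by (simp add: power_add)
qed

lemma bs_sd_left: assumes "finite A" "finite B" "finite C"
  shows "blade_sign (sd A B) C = blade_sign A C * blade_sign B C"
proof -
  have 1: "prs (sd A B) C = sd (prs A C) (prs B C)" by (auto simp: prs_def)
  have 2: "(sd A B) \<inter> C = sd (A \<inter> C) (B \<inter> C)" by auto
  show ?thesis unfolding bs_def' 1 2
    using parity_sd[OF finite_prs[OF assms(1,3)] finite_prs[OF assms(2,3)]]
      parity_sd[of "A \<inter> C" "B \<inter> C"] assms by simp
qed

lemma bs_sd_right: assumes "finite A" "finite B" "finite C"
  shows "blade_sign A (sd B C) = blade_sign A B * blade_sign A C"
proof -
  have 1: "prs A (sd B C) = sd (prs A B) (prs A C)" by (auto simp: prs_def)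
  have 2: "A \<inter> (sd B C) = sd (A \<inter> B) (A \<inter> C)" by auto
  show ?thesis unfolding bs_def' 1 2
    using parity_sd[OF finite_prs[OF assms(1,2)] finite_prs[OF assms(1,3)]]
      parity_sd[of "A \<inter> B" "A \<inter> C"] assms by simp
qed

lemma bs_sq: "blade_sign A B * blade_sign A B = 1"
  unfolding bs_def' power_add[symmetric] by (simp add: mult_2[symmetric] power_mult)

lemma bs_cocycle: assumes "finite A" "finite B" "finite C"
  shows "blade_sign A B * blade_sign (sd A B) C = blade_sign A (sd B C) * blade_sign B C"
  using assms by (simp add: bs_sd_left bs_sd_right mult_ac)

lemma bs_empty_left[simp]: "blade_sign {} B = 1"
  by (simp add: bs_def' prs_def)
lemma bs_empty_right[simp]: "blade_sign A {} = 1"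
  by (simp add: bs_def' prs_def)

lemma bs_single: "blade_sign {a} {c} = (if c < a then -1 else 1) * (if a = c then -1 else 1)"
proof -
  have "prs {a} {c} = (if c < a then {(a, c)} else {})" by (auto simp: prs_def)
  moreover have "{a} \<inter> {c} = (if a = c then {a} else {})" by auto
  ultimately show ?thesis by (simp add: bs_def')
qed

lemma bs_min: assumes "\<forall>x\<in>A. a < x" shows "blade_sign {a} A = 1"
proof -
  have "prs {a} A = {}" using assms by (auto simp: prs_def)
  moreover have "{a} \<inter> A = {}" using assms by auto
  ultimately show ?thesis by (simp add: bs_def')
qed

lemma bs_pm: "blade_sign A B = 1 \<or> blade_sign A B = -1"
  unfolding bs_def' power_add[symmetric]
  by (cases "even (card (prs A B) + card (A \<inter> B))") auto

lemma pyp_gen: fixes P W :: "'a::real_algebra_1"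
  assumes WP: "W * P = (-2 * k) *\<^sub>R 1 - P * W"
  and PP: "P * P = (- m) *\<^sub>R 1"
 shows "(s *\<^sub>R 1 + P) * (t *\<^sub>R 1 + W) * (s *\<^sub>R 1 + P) =
   (s * t * s - 2 * s * k - t * m) *\<^sub>R 1 + (2 * s * t - 2 * k) *\<^sub>R P + (s * s + m) *\<^sub>R W"
proof -
  have PWP: "P * W * P = (-2 * k) *\<^sub>R P + m *\<^sub>R W"
  proof -
    have "P * W * P = P * (W * P)" by (simp add: mult.assoc)
    also have "\<dots> = (-2 * k) *\<^sub>R P - (P * P) * W" by (simp add: WP right_diff_distrib mult.assoc)
    also have "\<dots> = (-2 * k) *\<^sub>R P + m *\<^sub>R W" by (simp add: PP)
    finally show ?thesis .
  qed
  have "(s *\<^sub>R 1 + P) * (t *\<^sub>R 1 + W) * (s *\<^sub>R 1 + P) =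
     (s * t * s) *\<^sub>R 1 + (s * t) *\<^sub>R P + (s * s) *\<^sub>R W + s *\<^sub>R (W * P) + (t * s) *\<^sub>R P + t *\<^sub>R (P * P) + s *\<^sub>R (P * W) + P * W * P"
    by (simp add: distrib_left distrib_right scaleR_add_right add_ac mult_ac)
  also have "\<dots> = (s * t * s) *\<^sub>R 1 + (s * t) *\<^sub>R P + (s * s) *\<^sub>R W + s *\<^sub>R ((-2 * k) *\<^sub>R 1 - P * W) + (t * s) *\<^sub>R P + t *\<^sub>R ((- m) *\<^sub>R 1) + s *\<^sub>R (P * W) + ((-2 * k) *\<^sub>R P + m *\<^sub>R W)"
    by (simp only: WP PP PWP)
  also have "\<dots> = (s * t * s - 2 * s * k - t * m) *\<^sub>R 1 + (2 * s * t - 2 * k) *\<^sub>R P + (s * s + m) *\<^sub>R W"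
    by (simp add: scaleR_diff_right scaleR_add_left scaleR_diff_left algebra_simps; simp add: scaleR_add_left[symmetric])
  finally show ?thesis .
qed

locale cliff =
  fixes n :: nat and e :: "nat \<Rightarrow> 'm::finite sqm"
  assumes n2: "2 \<le> n"
  and rel: "\<And>i j. i \<in> {1..n} \<Longrightarrow> j \<in> {1..n} \<Longrightarrow> e i * e j + e j * e i = (if i = j then -2 else 0)"
  and skew: "\<And>i. i \<in> {1..n} \<Longrightarrow> ccadj (e i) = - e i"
begin

abbreviation eps where "eps \<equiv> e 1"
definition X :: "nat \<Rightarrow> 'm sqm" where "X j = e 1 * e j"

lemma ee_same: "i \<in> {1..n} \<Longrightarrow> e i * e i = -1"
  using rel[of i i] by (intro half_eq) simp

lemma ee_anti: "i \<in> {1..n} \<Longrightarrow> j \<in> {1..n} \<Longrightarrow> i \<noteq> j \<Longrightarrow> e i * e j = - (e j * e i)"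
  using rel[of i j] by (simp add: eq_neg_iff_add_eq_0)

lemma one_in: "1 \<in> {1..n}" using n2 by simp

lemma eps2: "eps * eps = -1" using ee_same[OF one_in] .

lemma ej1: "j \<in> {2..n} \<Longrightarrow> e j * eps = - (eps * e j)"
  using ee_anti[of j 1] one_in by auto

lemma XX: assumes "j \<in> {2..n}" shows "X j * X j = -1"
proof -
  have j: "j \<in> {1..n}" using assms by auto
  have "X j * X j = e 1 * (e j * e 1) * e j" by (simp add: X_def mult.assoc)
  also have "\<dots> = - (e 1 * e 1 * (e j * e j))" using ej1[OF assms] by (simp add: mult.assoc)
  also have "\<dots> = -1" using eps2 ee_same[OF j] by simp
  finally show ?thesis .
qed

lemma X_anti: assumes "i \<in> {2..n}" "j \<in> {2..n}" "i \<noteq> j" shows "X i * X j = - (X j * X i)"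
proof -
  have "X i * X j = e 1 * (e i * e 1) * e j" by (simp add: X_def mult.assoc)
  also have "\<dots> = - (e 1 * e 1 * (e i * e j))" using ej1[OF assms(1)] by (simp add: mult.assoc)
  also have "\<dots> = e i * e j" using eps2 by simp
  finally have 1: "X i * X j = e i * e j" .
  have "X j * X i = e 1 * (e j * e 1) * e i" by (simp add: X_def mult.assoc)
  also have "\<dots> = - (e 1 * e 1 * (e j * e i))" using ej1[OF assms(2)] by (simp add: mult.assoc)
  also have "\<dots> = e j * e i" using eps2 by simp
  finally have 2: "X j * X i = e j * e i" .
  show ?thesis using 1 2 ee_anti[of i j] assms by auto
qed

lemma eps_X: assumes "j \<in> {2..n}" shows "eps * X j = - (X j * eps)"
proof -
  have "X j * eps = e 1 * (e j * e 1)" by (simp add: X_def mult.assoc)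
  also have "\<dots> = - (e 1 * e 1 * e j)" using ej1[OF assms] by (simp add: mult.assoc)
  finally show ?thesis using eps2 by (simp add: X_def mult.assoc)
qed


definition T :: "nat set \<Rightarrow> 'm sqm" where
  "T A = foldr (\<lambda>j M. X j * M) (sorted_list_of_set A) 1"

lemma T_empty[simp]: "T {} = 1" by (simp add: T_def)

lemma T_insert: assumes "finite A" "\<forall>x\<in>A. c < x" shows "T (insert c A) = X c * T A"
proof -
  have "c \<notin> A" using assms by auto
  then have "sorted_list_of_set (insert c A) = insort c (sorted_list_of_set A)"
    using assms by (simp add: sorted_list_of_set_insert)
  also have "\<dots> = c # sorted_list_of_set A"
    by (rule insort_is_Cons) (use assms in auto)
  finally show ?thesis by (simp add: T_def)
qed

lemma T_single: "T {j} = X j"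
  using T_insert[of "{}" j] by simp

lemma comm_T: assumes "finite A" "\<forall>j\<in>A. U * X j = \<sigma> j *\<^sub>R (X j * U)"
  shows "U * T A = (\<Prod>j\<in>A. \<sigma> j) *\<^sub>R (T A * U)"
  using assms
proof (induction A rule: finite_linorder_min_induct)
  case empty
  then show ?case by simp
next
  case (insert b A)
  have nb: "b \<notin> A" using insert by auto
  have TI: "T (insert b A) = X b * T A" using T_insert insert(1,2) by blast
  have "U * T (insert b A) = (U * X b) * T A" using TI by (simp add: mult.assoc)
  also have "\<dots> = \<sigma> b *\<^sub>R (X b * (U * T A))" using insert by (simp add: mult.assoc)
  also have "\<dots> = \<sigma> b *\<^sub>R (X b * ((\<Prod>j\<in>A. \<sigma> j) *\<^sub>R (T A * U)))" using insert by simp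
  also have "\<dots> = (\<Prod>j\<in>insert b A. \<sigma> j) *\<^sub>R (T (insert b A) * U)"
    using TI nb insert(1) by (simp add: mult.assoc)
  finally show ?case .
qed

lemma XT: assumes "a \<in> {2..n}" "C \<subseteq> {2..n}"
  shows "X a * T C = blade_sign {a} C *\<^sub>R T (sd {a} C)"
proof -
  have "finite C" using assms(2) finite_subset by blast
  then show ?thesis using assms(2)
  proof (induction C rule: finite_linorder_min_induct)
    case empty
    then show ?case by (simp add: T_single)
  next
    case (insert c C)
    have cC: "c \<notin> C" using insert by auto
    have c2: "c \<in> {2..n}" and C2: "C \<subseteq> {2..n}" using insert by auto
    have IH: "X a * T C = blade_sign {a} C *\<^sub>R T (sd {a} C)" using insert C2 by blast
    have TI: "T (insert c C) = X c * T C" using T_insert insert by blast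
    have bsI: "blade_sign {a} (insert c C) = blade_sign {a} {c} * blade_sign {a} C"
    proof -
      have "insert c C = sd {c} C" using cC by auto
      then show ?thesis using bs_sd_right[of "{a}" "{c}" C] insert by simp
    qed
    consider "a < c" | "a = c" | "c < a" by linarith
    then show ?case
    proof cases
      case 1
      have "sd {a} (insert c C) = insert a (insert c C)" using 1 insert by auto
      moreover have "T (insert a (insert c C)) = X a * T (insert c C)"
        using 1 insert by (intro T_insert) auto
      moreover have "blade_sign {a} (insert c C) = 1" using 1 insert by (intro bs_min) auto
      ultimately show ?thesis by simp
    next
      case 2
      have "X a * T (insert c C) = (X a * X a) * T C" using TI 2 by (simp add: mult.assoc)
      also have "\<dots> = - T C" using XX[OF assms(1)] by simp
      finally have L: "X a * T (insert c C) = - T C" .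
      have "sd {a} (insert c C) = C" using 2 cC by auto
      moreover have "blade_sign {a} C = 1" using 2 insert by (intro bs_min) auto
      ultimately show ?thesis using L bsI 2 by (simp add: bs_single)
    next
      case 3
      have "X a * T (insert c C) = (X a * X c) * T C" using TI by (simp add: mult.assoc)
      also have "\<dots> = - (X c * (X a * T C))" using X_anti[OF assms(1) c2] 3 by (simp add: mult.assoc)
      also have "\<dots> = - (blade_sign {a} C *\<^sub>R (X c * T (sd {a} C)))" using IH by simp
      also have "X c * T (sd {a} C) = T (insert c (sd {a} C))"
        using 3 insert by (intro T_insert[symmetric]) auto
      also have "insert c (sd {a} C) = sd {a} (insert c C)" using 3 cC by auto
      finally show ?thesis using bsI 3 by (simp add: bs_single)
    qed
  qed
qed

lemma TT: assumes "A \<subseteq> {2..n}" "B \<subseteq> {2..n}"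
  shows "T A * T B = blade_sign A B *\<^sub>R T (sd A B)"
proof -
  have fB: "finite B" using assms(2) finite_subset by blast
  have "finite A" using assms(1) finite_subset by blast
  then show ?thesis using assms(1)
  proof (induction A rule: finite_linorder_min_induct)
    case empty
    then show ?case by simp
  next
    case (insert a A)
    have aA: "a \<notin> A" using insert by auto
    have a2: "a \<in> {2..n}" and A2: "A \<subseteq> {2..n}" using insert by auto
    have IH: "T A * T B = blade_sign A B *\<^sub>R T (sd A B)" using insert A2 by blast
    have sAB: "sd A B \<subseteq> {2..n}" using A2 assms(2) by auto
    have "T (insert a A) * T B = X a * (T A * T B)"
      using T_insert insert by (simp add: mult.assoc)
    also have "\<dots> = blade_sign A B *\<^sub>R (X a * T (sd A B))" using IH by simp
    also have "\<dots> = (blade_sign A B * blade_sign {a} (sd A B)) *\<^sub>R T (sd {a} (sd A B))"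
      using XT[OF a2 sAB] by simp
    also have "sd {a} (sd A B) = sd (insert a A) B" using aA by auto
    also have "blade_sign A B * blade_sign {a} (sd A B) = blade_sign (insert a A) B"
    proof -
      have "blade_sign {a} A * blade_sign (sd {a} A) B = blade_sign {a} (sd A B) * blade_sign A B"
        using bs_cocycle[of "{a}" A B] insert fB by simp
      moreover have "blade_sign {a} A = 1" using insert by (intro bs_min) auto
      moreover have "sd {a} A = insert a A" using aA by auto
      ultimately show ?thesis by (simp add: mult.commute)
    qed
    finally show ?case .
  qed
qed

lemma eps2': "e (Suc 0) * e (Suc 0) = -1" using eps2 by simp
lemma ccadj_eps': "ccadj (e (Suc 0)) = - e (Suc 0)" using skew[OF one_in] by simp

definition tauM :: "mv \<Rightarrow> 'm sqm" where
  "tauM a = (\<Sum>A\<in>Pow {2..n}. a A *\<^sub>R T A)"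

lemma finP: "finite (Pow {2..n})" by simp

lemma tauM_mult: "tauM (cl_mult n a b) = tauM a * tauM b"
proof -
  let ?P = "Pow {2..n}"
  have "tauM (cl_mult n a b) = (\<Sum>C\<in>?P. \<Sum>A\<in>?P. \<Sum>B\<in>?P.
      (if sd A B = C then (blade_sign A B * a A * b B) *\<^sub>R T C else 0))"
    unfolding tauM_def cl_mult_def by (simp add: scaleR_sum_left scaleR_if0)
  also have "\<dots> = (\<Sum>A\<in>?P. \<Sum>C\<in>?P. \<Sum>B\<in>?P.
      (if sd A B = C then (blade_sign A B * a A * b B) *\<^sub>R T C else 0))"
    by (rule sum.swap)
  also have "\<dots> = (\<Sum>A\<in>?P. \<Sum>B\<in>?P. \<Sum>C\<in>?P.
      (if sd A B = C then (blade_sign A B * a A * b B) *\<^sub>R T C else 0))"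
    by (rule sum.cong[OF refl], rule sum.swap)
  also have "\<dots> = (\<Sum>A\<in>?P. \<Sum>B\<in>?P. (blade_sign A B * a A * b B) *\<^sub>R T (sd A B))"
  proof (rule sum.cong[OF refl], rule sum.cong[OF refl])
    fix A B assume "A \<in> ?P" "B \<in> ?P"
    then have "sd A B \<in> ?P" by auto
    then show "(\<Sum>C\<in>?P. (if sd A B = C then (blade_sign A B * a A * b B) *\<^sub>R T C else 0))
      = (blade_sign A B * a A * b B) *\<^sub>R T (sd A B)"
      by (simp add: sum.delta)
  qed
  also have "\<dots> = (\<Sum>A\<in>?P. \<Sum>B\<in>?P. (a A *\<^sub>R T A) * (b B *\<^sub>R T B))"
  proof (rule sum.cong[OF refl], rule sum.cong[OF refl])
    fix A B assume "A \<in> ?P" "B \<in> ?P"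
    then show "(blade_sign A B * a A * b B) *\<^sub>R T (sd A B) = (a A *\<^sub>R T A) * (b B *\<^sub>R T B)"
      using TT[of A B] by (simp add: mult_ac)
  qed
  also have "\<dots> = tauM a * tauM b"
    unfolding tauM_def by (simp only: sum_distrib_right) (simp only: sum_distrib_left)
  finally show ?thesis .
qed

lemma tauM_add: "tauM (cl_add a b) = tauM a + tauM b"
  unfolding tauM_def cl_add_def by (simp add: scaleR_add_left sum.distrib)
lemma tauM_sub: "tauM (cl_sub a b) = tauM a - tauM b"
  unfolding tauM_def cl_sub_def by (simp add: scaleR_diff_left sum_subtractf)
lemma tauM_neg: "tauM (cl_neg a) = - tauM a"
  unfolding tauM_def cl_neg_def by (simp add: sum_negf)
lemma tauM_scale: "tauM (cl_scale r a) = r *\<^sub>R tauM a"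
  unfolding tauM_def cl_scale_def by (simp add: scaleR_sum_right)
lemma tauM_zero: "tauM (\<lambda>_. 0) = 0"
  unfolding tauM_def by simp
lemma tauM_one: "tauM cl_one = 1"
proof -
  have "tauM cl_one = (\<Sum>A\<in>Pow {2..n}. (if A = {} then T A else 0))"
    unfolding tauM_def cl_one_def cl_scalar_def by (rule sum.cong) auto
  also have "\<dots> = T {}" by (simp add: sum.delta')
  finally show ?thesis by simp
qed

lemma eps_T: assumes "A \<subseteq> {2..n}" shows "eps * T A = (-1) ^ card A *\<^sub>R (T A * eps)"
proof -
  have "finite A" using assms finite_subset by blast
  moreover have "\<forall>j\<in>A. eps * X j = (-1) *\<^sub>R (X j * eps)" using assms eps_X by auto
  ultimately show ?thesis using comm_T[of A eps "\<lambda>_. -1"] by simp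
qed

lemma tauM_prin: "tauM (cl_prin a) = eps * tauM a * (- eps)"
proof -
  have "eps * tauM a * (- eps) = (\<Sum>A\<in>Pow {2..n}. a A *\<^sub>R (eps * T A * (- eps)))"
    unfolding tauM_def by (simp only: sum_distrib_left sum_distrib_right mult_scaleR_right mult_scaleR_left)
  also have "\<dots> = (\<Sum>A\<in>Pow {2..n}. ((-1) ^ card A * a A) *\<^sub>R T A)"
  proof (rule sum.cong[OF refl])
    fix A assume "A \<in> Pow {2..n}"
    then have "eps * T A * (- eps) = (-1) ^ card A *\<^sub>R (T A * (eps * (- eps)))"
      using eps_T[of A] by (simp add: mult.assoc)
    also have "\<dots> = (-1) ^ card A *\<^sub>R T A" using eps2 by simp
    finally show "a A *\<^sub>R (eps * T A * (- eps)) = ((-1) ^ card A * a A) *\<^sub>R T A" by simp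
  qed
  finally show ?thesis unfolding tauM_def cl_prin_def by (simp add: sum_negf)
qed

definition R :: "'m sqm \<Rightarrow> 'm sqm" where "R Y = - (eps * ccadj Y * eps)"

lemma ccadj_eps: "ccadj eps = - eps" using skew[OF one_in] .

lemma R_mult: "R (Y * Z) = R Z * R Y"
proof -
  have "R Z * R Y = eps * ccadj Z * (eps * eps) * ccadj Y * eps" by (simp add: R_def mult.assoc)
  also have "\<dots> = R (Y * Z)" using eps2 by (simp add: R_def ccadj_mult mult.assoc)
  finally show ?thesis by simp
qed
lemma R_one: "R 1 = 1" using eps2 by (simp add: R_def ccadj_one)
lemma R_zero: "R 0 = 0" by (simp add: R_def ccadj_zero)
lemma R_add: "R (Y + Z) = R Y + R Z" by (simp add: R_def ccadj_add distrib_left distrib_right)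
lemma R_diff: "R (Y - Z) = R Y - R Z" by (simp add: R_def ccadj_diff left_diff_distrib right_diff_distrib)
lemma R_minus: "R (- Y) = - R Y" by (simp add: R_def ccadj_minus)
lemma R_scaleR: "R (r *\<^sub>R Y) = r *\<^sub>R R Y" by (simp add: R_def ccadj_scaleR)
lemma R_sum: "finite S \<Longrightarrow> R (sum f S) = (\<Sum>i\<in>S. R (f i))"
  by (induction S rule: finite_induct) (simp_all add: R_zero R_add)
lemma R_R: "R (R Y) = Y"
proof -
  have "R (R Y) = eps * eps * Y * (eps * eps)"
    by (simp add: R_def ccadj_minus ccadj_mult ccadj_ccadj ccadj_eps ccadj_eps' mult.assoc)
  then show ?thesis using eps2 by simp
qed

lemma R_X: assumes "j \<in> {2..n}" shows "R (X j) = X j"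
proof -
  have j: "j \<in> {1..n}" using assms by auto
  have "R (X j) = - (eps * e j * (eps * eps))" by (simp add: R_def X_def ccadj_mult ccadj_eps ccadj_eps' skew[OF j] mult.assoc)
  also have "\<dots> = X j" using eps2 by (simp add: X_def)
  finally show ?thesis .
qed

lemma exp_lemma: "Suc k * k div 2 = k * (k - 1) div 2 + k"
proof (cases k)
  case 0 then show ?thesis by simp
next
  case (Suc m)
  have "Suc k * k = k * (k - 1) + 2 * k" using Suc by simp
  moreover have "even (k * (k - 1))" by (cases "even k") auto
  ultimately show ?thesis by auto
qed

lemma R_T: assumes "A \<subseteq> {2..n}"
  shows "R (T A) = (-1) ^ (card A * (card A - 1) div 2) *\<^sub>R T A"
proof -
  have "finite A" using assms finite_subset by blast
  then show ?thesis using assms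
  proof (induction A rule: finite_linorder_min_induct)
    case empty
    then show ?case by (simp add: R_one)
  next
    case (insert c C)
    have cC: "c \<notin> C" using insert by auto
    have c2: "c \<in> {2..n}" and C2: "C \<subseteq> {2..n}" using insert by auto
    have TI: "T (insert c C) = X c * T C" using T_insert insert by blast
    have "\<forall>j\<in>C. X c * X j = (-1) *\<^sub>R (X j * X c)"
      using X_anti[OF c2] C2 insert by force
    then have comm: "X c * T C = (-1) ^ card C *\<^sub>R (T C * X c)"
      using comm_T[of C "X c" "\<lambda>_. -1"] insert by simp
    have comm2: "T C * X c = (-1) ^ card C *\<^sub>R (X c * T C)"
    proof -
      have "(-1) ^ card C *\<^sub>R (X c * T C) = ((-1) ^ card C * (-1) ^ card C) *\<^sub>R (T C * X c)"
        using comm by simp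
      then show ?thesis by (simp add: power_add[symmetric] mult_2[symmetric] power_mult)
    qed
    have "R (T (insert c C)) = R (T C) * X c" using TI R_mult R_X[OF c2] by simp
    also have "\<dots> = ((-1) ^ (card C * (card C - 1) div 2) * (-1) ^ card C) *\<^sub>R T (insert c C)"
      using insert C2 comm2 TI by simp
    also have "(-1::real) ^ (card C * (card C - 1) div 2) * (-1) ^ card C
       = (-1) ^ (card (insert c C) * (card (insert c C) - 1) div 2)"
      using cC insert(1) exp_lemma[of "card C"] by (simp add: power_add)
    finally show ?case .
  qed
qed

lemma tauM_rev: "tauM (cl_rev a) = R (tauM a)"
proof -
  have "R (tauM a) = (\<Sum>A\<in>Pow {2..n}. a A *\<^sub>R R (T A))"
    unfolding tauM_def by (simp add: R_sum R_scaleR)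
  also have "\<dots> = tauM (cl_rev a)"
    unfolding tauM_def cl_rev_def by (rule sum.cong) (auto simp: R_T)
  finally show ?thesis by simp
qed

section \<open>Paravectors\<close>

definition V :: "(nat \<Rightarrow> real) \<Rightarrow> 'm sqm" where
  "V c = (\<Sum>j\<in>{2..n}. c j *\<^sub>R X j)"

definition pv :: "'m sqm \<Rightarrow> bool" where
  "pv y \<longleftrightarrow> (\<exists>s c. y = s *\<^sub>R 1 + V c)"

lemma V_lin: "V (\<lambda>j. a * c j + b * d j) = a *\<^sub>R V c + b *\<^sub>R V d"
  unfolding V_def by (simp add: scaleR_add_left sum.distrib scaleR_sum_right)

lemma XX2: assumes "i \<in> {2..n}" "j \<in> {2..n}"
  shows "X i * X j + X j * X i = (if i = j then (-2::real) *\<^sub>R 1 else 0)"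
  using XX[OF assms(1)] X_anti[OF assms] by (auto simp: scaleR_2)

lemma V_anti: "V c * V d + V d * V c = (-2 * (\<Sum>j\<in>{2..n}. c j * d j)) *\<^sub>R 1"
proof -
  let ?S = "{2..n}"
  have 1: "V c * V d = (\<Sum>i\<in>?S. \<Sum>j\<in>?S. (c i * d j) *\<^sub>R (X i * X j))"
    unfolding V_def by (simp only: sum_distrib_right) (simp add: sum_distrib_left mult.commute)
  have "V d * V c = (\<Sum>i\<in>?S. \<Sum>j\<in>?S. (d i * c j) *\<^sub>R (X i * X j))"
    unfolding V_def by (simp only: sum_distrib_right) (simp add: sum_distrib_left mult.commute)
  also have "\<dots> = (\<Sum>j\<in>?S. \<Sum>i\<in>?S. (d i * c j) *\<^sub>R (X i * X j))" by (rule sum.swap)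
  finally have 2: "V d * V c = (\<Sum>i\<in>?S. \<Sum>j\<in>?S. (c i * d j) *\<^sub>R (X j * X i))"
    by (simp add: mult.commute)
  have "V c * V d + V d * V c = (\<Sum>i\<in>?S. \<Sum>j\<in>?S. (c i * d j) *\<^sub>R (X i * X j + X j * X i))"
    unfolding 1 2 by (simp add: sum.distrib[symmetric] scaleR_add_right)
  also have "\<dots> = (\<Sum>i\<in>?S. \<Sum>j\<in>?S. (if i = j then (-2 * (c i * d i)) *\<^sub>R 1 else 0))"
    by (intro sum.cong refl) (auto simp: XX2)
  also have "\<dots> = (\<Sum>i\<in>?S. (-2 * (c i * d i)) *\<^sub>R 1)"
    by (simp add: sum.delta)
  also have "\<dots> = (-2 * (\<Sum>j\<in>?S. c j * d j)) *\<^sub>R 1"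
    by (simp add: scaleR_sum_left sum_distrib_left)
  finally show ?thesis .
qed

lemma half_scaleR: fixes y :: "'a::real_vector" shows "y + y = (2 * t) *\<^sub>R z \<Longrightarrow> y = t *\<^sub>R z"
proof -
  assume a: "y + y = (2 * t) *\<^sub>R z"
  have 1: "(2::real) *\<^sub>R y = (2 * t) *\<^sub>R z" using a by (simp add: scaleR_2)
  have "y = (1/2::real) *\<^sub>R ((2::real) *\<^sub>R y)" by simp
  then show ?thesis unfolding 1 by simp
qed

lemma V_sq: "V c * V c = (- (\<Sum>j\<in>{2..n}. c j * c j)) *\<^sub>R 1"
proof (rule half_scaleR)
  have "(-2 * (\<Sum>j\<in>{2..n}. c j * c j)) = 2 * (- (\<Sum>j\<in>{2..n}. c j * c j))" by simp
  then show "V c * V c + V c * V c = (2 * (- (\<Sum>j\<in>{2..n}. c j * c j))) *\<^sub>R 1"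
    using V_anti[of c c] by metis
qed


lemma pv_scal: "pv (s *\<^sub>R 1)" unfolding pv_def
  by (rule exI[of _ s], rule exI[of _ "\<lambda>_. 0"]) (simp add: V_def)
lemma pv_zero: "pv 0" using pv_scal[of 0] by simp
lemma pv_one: "pv 1" using pv_scal[of 1] by simp
lemma pv_lin: assumes "pv p" "pv q" shows "pv (a *\<^sub>R p + b *\<^sub>R q)"
proof -
  obtain s c t d where "p = s *\<^sub>R 1 + V c" "q = t *\<^sub>R 1 + V d" using assms unfolding pv_def by blast
  then have "a *\<^sub>R p + b *\<^sub>R q = (a * s + b * t) *\<^sub>R 1 + V (\<lambda>j. a * c j + b * d j)"
    by (simp add: V_lin scaleR_add_right scaleR_add_left add_ac)
  then show ?thesis unfolding pv_def by - (intro exI, assumption)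
qed
lemma pv_diff: "pv p \<Longrightarrow> pv q \<Longrightarrow> pv (p - q)" using pv_lin[of p q 1 "-1"] by simp
lemma pv_add: "pv p \<Longrightarrow> pv q \<Longrightarrow> pv (p + q)" using pv_lin[of p q 1 1] by simp
lemma pv_scaleR: "pv p \<Longrightarrow> pv (a *\<^sub>R p)" using pv_lin[of p 0 a 0] pv_zero by simp

lemma R_V: "R (V c) = V c"
  unfolding V_def by (simp add: R_sum R_scaleR R_X)

lemma R_pv: "pv p \<Longrightarrow> R p = p"
  unfolding pv_def by (auto simp: R_add R_scaleR R_one R_V)

lemma pyp: assumes "pv p" "pv y" shows "pv (p * y * p)"
proof -
  obtain s c t d where p: "p = s *\<^sub>R 1 + V c" and y: "y = t *\<^sub>R 1 + V d"
    using assms unfolding pv_def by blast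
  define k where "k = (\<Sum>j\<in>{2..n}. c j * d j)"
  define m where "m = (\<Sum>j\<in>{2..n}. c j * c j)"
  have WP: "V d * V c = (-2 * k) *\<^sub>R 1 - V c * V d"
  proof -
    have "V d * V c = (V c * V d + V d * V c) - V c * V d" by simp
    also have "\<dots> = (-2 * k) *\<^sub>R 1 - V c * V d" unfolding V_anti k_def ..
    finally show ?thesis .
  qed
  have PP: "V c * V c = (- m) *\<^sub>R 1" using V_sq unfolding m_def .
  have "p * y * p = (s * t * s - 2 * s * k - t * m) *\<^sub>R 1 + (2 * s * t - 2 * k) *\<^sub>R V c + (s * s + m) *\<^sub>R V d"
    unfolding p y by (rule pyp_gen[OF WP PP])
  also have "\<dots> = (s * t * s - 2 * s * k - t * m) *\<^sub>R 1 + V (\<lambda>j. (2 * s * t - 2 * k) * c j + (s * s + m) * d j)"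
    by (simp add: V_lin add.assoc)
  finally show ?thesis unfolding pv_def by - (intro exI, assumption)
qed

lemma pv_V: "pv (V c)" unfolding pv_def by (rule exI[of _ 0], rule exI[of _ c]) simp

lemma conj_gen: fixes P :: "'a::real_algebra_1" assumes PP: "P * P = (- m) *\<^sub>R 1"
  shows "(s *\<^sub>R 1 - P) * (s *\<^sub>R 1 + P) = (s * s + m) *\<^sub>R 1"
    and "(s *\<^sub>R 1 + P) * (s *\<^sub>R 1 - P) = (s * s + m) *\<^sub>R 1"
  by (simp_all add: distrib_left distrib_right left_diff_distrib right_diff_distrib PP scaleR_add_left
      scaleR_diff_right scaleR_add_right)

lemma pv_inv': assumes "p = s *\<^sub>R 1 + V c" "s * s + (\<Sum>j\<in>{2..n}. c j * c j) \<noteq> 0"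
  shows "\<exists>q. pv q \<and> p * q = 1 \<and> q * p = 1"
proof -
  define N where "N = s * s + (\<Sum>j\<in>{2..n}. c j * c j)"
  have N: "N \<noteq> 0" using assms N_def by simp
  define q where "q = (1 / N) *\<^sub>R (s *\<^sub>R 1 - V c)"
  have "pv q" unfolding q_def by (intro pv_scaleR pv_diff pv_scal pv_V)
  moreover have "p * q = 1" unfolding q_def assms(1) using conj_gen(2)[OF V_sq[of c], of s] N
    by (simp add: N_def)
  moreover have "q * p = 1" unfolding q_def assms(1) using conj_gen(1)[OF V_sq[of c], of s] N
    by (simp add: N_def)
  ultimately show ?thesis by blast
qed

lemma pv_inv: assumes "pv p" "p \<noteq> 0" shows "\<exists>q. pv q \<and> p * q = 1 \<and> q * p = 1"
proof -
  obtain s c where p: "p = s *\<^sub>R 1 + V c" using assms unfolding pv_def by blast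
  show ?thesis
  proof (cases "s * s + (\<Sum>j\<in>{2..n}. c j * c j) = 0")
    case True
    have nn: "0 \<le> (\<Sum>j\<in>{2..n}. c j * c j)" by (intro sum_nonneg) simp
    have "s * s = 0 \<and> (\<Sum>j\<in>{2..n}. c j * c j) = 0"
      using True nn by (smt (verit) zero_le_square)
    then have "s = 0" and "\<forall>j\<in>{2..n}. c j * c j = 0"
      using sum_nonneg_eq_0_iff[of "{2..n}" "\<lambda>j. c j * c j"] by auto
    then have "p = 0" unfolding p V_def by simp
    then show ?thesis using assms by simp
  next
    case False
    then show ?thesis using pv_inv'[OF p] by blast
  qed
qed

lemma tauM_vec: assumes "x \<in> vecs n" shows "tauM x = x {} *\<^sub>R 1 + V (\<lambda>j. x {j})"
proof -
  let ?S0 = "insert {} ((\<lambda>j. {j}) ` {2..n})"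
  have sub: "?S0 \<subseteq> Pow {2..n}" by auto
  have "tauM x = (\<Sum>A\<in>?S0. x A *\<^sub>R T A)"
    unfolding tauM_def
  proof (rule sum.mono_neutral_right[OF finP sub], rule ballI)
    fix A assume "A \<in> Pow {2..n} - ?S0"
    then have "x A = 0" using assms unfolding vecs_def by auto
    then show "x A *\<^sub>R T A = 0" by simp
  qed
  also have "\<dots> = x {} *\<^sub>R T {} + (\<Sum>A\<in>(\<lambda>j. {j}) ` {2..n}. x A *\<^sub>R T A)"
    by (rule sum.insert) auto
  also have "(\<Sum>A\<in>(\<lambda>j. {j}) ` {2..n}. x A *\<^sub>R T A) = (\<Sum>j\<in>{2..n}. x {j} *\<^sub>R T {j})"
    by (rule sum.reindex_cong[of "\<lambda>j. {j}"]) (auto simp: inj_on_def)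
  finally show ?thesis by (simp add: V_def T_single)
qed

lemma pv_tauM_vec: "x \<in> vecs n \<Longrightarrow> pv (tauM x)"
  using tauM_vec unfolding pv_def by blast

lemma tauM_vec_inv: assumes "x \<in> vecs n" "x \<noteq> (\<lambda>_. 0)"
  shows "\<exists>q. pv q \<and> tauM x * q = 1 \<and> q * tauM x = 1"
proof (rule pv_inv'[OF tauM_vec[OF assms(1)]])
  obtain A where A: "x A \<noteq> 0" using assms(2) by auto
  then have "A = {} \<or> (\<exists>j\<in>{2..n}. A = {j})" using assms(1) unfolding vecs_def by auto
  then show "x {} * x {} + (\<Sum>j\<in>{2..n}. x {j} * x {j}) \<noteq> 0"
  proof
    assume "A = {}"
    then have "x {} * x {} > 0" using A by (cases "x {} > 0") (auto simp: mult_neg_neg)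
    moreover have "(\<Sum>j\<in>{2..n}. x {j} * x {j}) \<ge> 0" by (intro sum_nonneg) simp
    ultimately show ?thesis by linarith
  next
    assume "\<exists>j\<in>{2..n}. A = {j}"
    then obtain j where j: "j \<in> {2..n}" "A = {j}" by blast
    have pj: "x {j} * x {j} > 0" using j A by (cases "x {j} > 0") (auto simp: mult_neg_neg)
    have "(\<Sum>j\<in>{2..n}. x {j} * x {j}) > 0"
      using j pj by (intro sum_pos2[of _ j]) auto
    moreover have "x {} * x {} \<ge> 0" by simp
    ultimately show ?thesis by linarith
  qed
qed

definition G :: "'m sqm \<Rightarrow> bool" where
  "G Y \<longleftrightarrow> (\<exists>ps. (\<forall>p\<in>set ps. pv p) \<and> Y = foldr (*) ps 1)"

lemma foldr_append_mult: "foldr (*) (xs @ ys) (1::'a::monoid_mult) = foldr (*) xs 1 * foldr (*) ys 1"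
  by (induction xs) (simp_all add: mult.assoc)

lemma G_mult: assumes "G Y" "G Z" shows "G (Y * Z)"
proof -
  obtain ps qs where "\<forall>p\<in>set ps. pv p" "Y = foldr (*) ps 1" "\<forall>p\<in>set qs. pv p" "Z = foldr (*) qs 1"
    using assms unfolding G_def by blast
  then show ?thesis unfolding G_def by (intro exI[of _ "ps @ qs"]) (auto simp: foldr_append_mult simp del: foldr_append)
qed

lemma G_pv: "pv p \<Longrightarrow> G p" unfolding G_def by (intro exI[of _ "[p]"]) simp

lemma G_conj: assumes "G Z" "pv P" shows "pv (Z * P * R Z)"
proof -
  obtain ps where ps: "\<forall>p\<in>set ps. pv p" "Z = foldr (*) ps 1" using assms unfolding G_def by blast
  have "pv (foldr (*) ps 1 * P * R (foldr (*) ps 1))" using ps(1)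
  proof (induction ps)
    case Nil
    then show ?case using assms(2) by (simp add: R_one)
  next
    case (Cons p ps)
    let ?Z = "foldr (*) ps 1"
    have "foldr (*) (p # ps) 1 * P * R (foldr (*) (p # ps) 1) = p * (?Z * P * R ?Z) * R p"
      by (simp add: R_mult mult.assoc)
    also have "\<dots> = p * (?Z * P * R ?Z) * p" using Cons.prems R_pv by simp
    finally show ?case using Cons pyp by simp
  qed
  then show ?thesis using ps by simp
qed

lemma G_inv: assumes "\<forall>p\<in>set ps. pv p \<and> (\<exists>q. pv q \<and> p * q = 1 \<and> q * p = 1)"
  shows "\<exists>Z. G Z \<and> foldr (*) ps 1 * Z = 1 \<and> Z * foldr (*) ps 1 = 1"
  using assms
proof (induction ps)
  case Nil
  then show ?case using G_pv[OF pv_one] by auto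
next
  case (Cons p ps)
  obtain Z where Z: "G Z" "foldr (*) ps 1 * Z = 1" "Z * foldr (*) ps 1 = 1" using Cons by auto
  obtain q where q: "pv q" "p * q = 1" "q * p = 1" using Cons.prems by auto
  have "G (Z * q)" using G_mult[OF Z(1) G_pv[OF q(1)]] .
  moreover have "foldr (*) (p # ps) 1 * (Z * q) = 1"
  proof -
    have "foldr (*) (p # ps) 1 * (Z * q) = p * (foldr (*) ps 1 * Z) * q" by (simp add: mult.assoc)
    then show ?thesis using Z q by simp
  qed
  moreover have "(Z * q) * foldr (*) (p # ps) 1 = 1"
  proof -
    have "(Z * q) * foldr (*) (p # ps) 1 = Z * (q * p) * foldr (*) ps 1" by (simp add: mult.assoc)
    then show ?thesis using Z q by simp
  qed
  ultimately show ?case by blast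
qed

lemma tauM_foldr: "tauM (foldr (cl_mult n) vs cl_one) = foldr (*) (map tauM vs) 1"
  by (induction vs) (simp_all add: tauM_one tauM_mult)

lemma Gamma_tau: assumes "b \<in> clifford_group n"
  shows "G (tauM b) \<and> (\<exists>Z. G Z \<and> tauM b * Z = 1 \<and> Z * tauM b = 1)"
proof -
  obtain vs where vs: "b = foldr (cl_mult n) vs cl_one" "\<forall>v\<in>set vs. v \<in> vecs n \<and> v \<noteq> (\<lambda>_. 0)"
    using assms unfolding clifford_group_def by blast
  let ?ps = "map tauM vs"
  have tb: "tauM b = foldr (*) ?ps 1" using vs(1) tauM_foldr by simp
  have all: "\<forall>p\<in>set ?ps. pv p \<and> (\<exists>q. pv q \<and> p * q = 1 \<and> q * p = 1)"
    using vs(2) pv_tauM_vec tauM_vec_inv by auto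
  have "G (tauM b)" unfolding G_def tb using all by blast
  moreover have "\<exists>Z. G Z \<and> tauM b * Z = 1 \<and> Z * tauM b = 1" unfolding tb by (rule G_inv[OF all])
  ultimately show ?thesis by blast
qed

lemma G_zero: "G 0" using G_pv[OF pv_zero] .

lemma tr_anti: assumes UU: "U * U = -1" and UY: "U * Y = - (Y * U)" shows "tr Y = 0"
proof -
  have 1: "Y * U * U = - Y" using UU by (simp add: mult.assoc)
  have "tr (Y * U * U) = tr (U * (Y * U))" by (rule tr_mult)
  also have "U * (Y * U) = - (Y * U * U)" using UY by (simp add: mult.assoc[symmetric])
  finally have "tr (Y * U * U) = - tr (Y * U * U)" by (simp add: tr_minus)
  then have "tr (Y * U * U) = 0" by simp
  then show ?thesis unfolding 1 by (simp add: tr_minus)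
qed

lemma tr_T: assumes "A \<subseteq> {2..n}" "A \<noteq> {}" shows "tr (T A) = 0"
proof -
  have fA: "finite A" using assms(1) finite_subset by blast
  show ?thesis
  proof (cases "even (card A)")
    case False
    have "eps * T A = - (T A * eps)" using eps_T[OF assms(1)] False by simp
    then show ?thesis by (rule tr_anti[OF eps2])
  next
    case True
    obtain j where j: "j \<in> A" using assms(2) by blast
    have j2: "j \<in> {2..n}" using j assms(1) by auto
    define \<sigma> where "\<sigma> i = (if i = j then 1 else (-1::real))" for i
    have "\<forall>i\<in>A. X j * X i = \<sigma> i *\<^sub>R (X i * X j)"
      using X_anti[OF j2] assms(1) by (auto simp: \<sigma>_def)
    then have 1: "X j * T A = (\<Prod>i\<in>A. \<sigma> i) *\<^sub>R (T A * X j)" using comm_T[OF fA] by blast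
    have "(\<Prod>i\<in>A. \<sigma> i) = \<sigma> j * (\<Prod>i\<in>A - {j}. \<sigma> i)" using prod.remove[OF fA j] .
    also have "(\<Prod>i\<in>A - {j}. \<sigma> i) = (\<Prod>i\<in>A - {j}. -1)" by (rule prod.cong) (auto simp: \<sigma>_def)
    also have "\<dots> = (-1) ^ card (A - {j})" by simp
    also have "card (A - {j}) = card A - 1" using j fA by simp
    also have "odd (card A - 1)"
    proof -
      have "card A > 0" using fA j card_gt_0_iff by blast
      then show ?thesis using True by (cases "card A") auto
    qed
    then have "(-1::real) ^ (card A - 1) = -1" by simp
    finally have "(\<Prod>i\<in>A. \<sigma> i) = -1" by (simp add: \<sigma>_def)
    then have "X j * T A = - (T A * X j)" using 1 by simp
    then show ?thesis by (rule tr_anti[OF XX[OF j2]])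
  qed
qed

lemma tauM_inj: assumes "w \<in> CL n" "tauM w = 0" shows "w = (\<lambda>_. 0)"
proof
  fix B
  show "w B = 0"
  proof (cases "B \<subseteq> {2..n}")
    case False
    then show ?thesis using assms(1) unfolding CL_def by auto
  next
    case True
    have "0 = tr (tauM w * T B)" using assms(2) by (simp add: tr_def zero_sqm.rep_eq trace_def)
    also have "\<dots> = (\<Sum>A\<in>Pow {2..n}. of_real (w A) * tr (T A * T B))"
      unfolding tauM_def by (simp add: sum_distrib_right tr_sum tr_scaleR)
    also have "\<dots> = (\<Sum>A\<in>Pow {2..n}. (if A = B then of_real (w B * blade_sign B B) * of_nat CARD('m) else 0))"
    proof (rule sum.cong[OF refl])
      fix A assume A: "A \<in> Pow {2..n}"
      have "tr (T A * T B) = of_real (blade_sign A B) * tr (T (sd A B))"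
        using TT[of A B] A True by (simp add: tr_scaleR)
      moreover have "tr (T (sd A B)) = (if A = B then of_nat CARD('m) else 0)"
      proof (cases "A = B")
        case True then show ?thesis by (simp add: tr_one)
      next
        case False
        then have "sd A B \<noteq> {}" by auto
        then show ?thesis using tr_T[of "sd A B"] A \<open>B \<subseteq> {2..n}\<close> False by auto
      qed
      ultimately show "of_real (w A) * tr (T A * T B) =
        (if A = B then of_real (w B * blade_sign B B) * of_nat CARD('m) else 0)" by auto
    qed
    also have "\<dots> = of_real (w B * blade_sign B B) * of_nat CARD('m)"
      using True by (simp add: sum.delta')
    finally have "w B * blade_sign B B = 0" by simp
    then show ?thesis using bs_pm[of B B] by auto
  qed
qed

lemma cl_mult_CL: "cl_mult n a b \<in> CL n"
  unfolding CL_def cl_mult_def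
proof (intro CollectI allI impI sum.neutral ballI)
  fix A A' B' assume "\<not> A \<subseteq> {2..n}" "A' \<in> Pow {2..n}" "B' \<in> Pow {2..n}"
  then have "sd A' B' \<noteq> A" by auto
  then show "(if sd A' B' = A then blade_sign A' B' * a A' * b B' else 0) = 0" by simp
qed
lemma cl_rev_CL: "a \<in> CL n \<Longrightarrow> cl_rev a \<in> CL n"
  unfolding CL_def cl_rev_def by auto
lemma cl_sub_CL: "a \<in> CL n \<Longrightarrow> b \<in> CL n \<Longrightarrow> cl_sub a b \<in> CL n"
  unfolding CL_def cl_sub_def by auto
lemma zero_CL: "(\<lambda>_. 0) \<in> CL n" unfolding CL_def by auto
lemma cl_one_CL: "cl_one \<in> CL n" unfolding CL_def cl_one_def cl_scalar_def by auto
lemma Gamma_CL: "b \<in> clifford_group n \<Longrightarrow> b \<in> CL n"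
  unfolding clifford_group_def by (auto simp: neq_Nil_conv cl_mult_CL)

lemma key: assumes g: "(a, b, c, d) \<in> SL2_Gamma n" and x: "x \<in> vecs n"
  and wdef: "w = cl_sub (cl_rev d) (cl_mult n (cl_rev b) x)" and wnz: "w \<noteq> (\<lambda>_. 0)"
  shows "\<exists>Z. tauM w * Z = 1 \<and> Z * tauM w = 1"
proof -
  have mem: "a \<in> clifford_group n \<union> {\<lambda>_. 0}" "b \<in> clifford_group n \<union> {\<lambda>_. 0}"
    "c \<in> clifford_group n \<union> {\<lambda>_. 0}" "d \<in> clifford_group n \<union> {\<lambda>_. 0}"
    using g unfolding SL2_Gamma_def by auto
  have h1: "cl_sub (cl_mult n a (cl_rev d)) (cl_mult n b (cl_rev c)) = cl_one"
    and h2: "cl_mult n a (cl_rev b) \<in> vecs n" and h3: "cl_mult n c (cl_rev d) \<in> vecs n"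
    using g unfolding SL2_Gamma_def by auto
  define Ta Tb Tc Td where "Ta = tauM a" "Tb = tauM b" "Tc = tauM c" "Td = tauM d"
  have E1: "Ta * R Td - Tb * R Tc = 1"
    using arg_cong[OF h1, of tauM] by (simp add: tauM_sub tauM_mult tauM_rev tauM_one Ta_Tb_Tc_Td_def)
  define P where "P = Ta * R Tb"
  have pvP: "pv P" using pv_tauM_vec[OF h2] by (simp add: tauM_mult tauM_rev P_def Ta_Tb_Tc_Td_def)
  define Q where "Q = Tc * R Td"
  have pvQ: "pv Q" using pv_tauM_vec[OF h3] by (simp add: tauM_mult tauM_rev Q_def Ta_Tb_Tc_Td_def)
  have pvX: "pv (tauM x)" using pv_tauM_vec[OF x] .
  have W: "tauM w = R Td - R Tb * tauM x"
    unfolding wdef by (simp add: tauM_sub tauM_mult tauM_rev Ta_Tb_Tc_Td_def)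
  have wCL: "w \<in> CL n"
  proof -
    have "d \<in> CL n" using mem(4) Gamma_CL zero_CL by auto
    then show ?thesis unfolding wdef by (intro cl_sub_CL cl_rev_CL cl_mult_CL)
  qed
  have Wnz: "tauM w \<noteq> 0" using tauM_inj[OF wCL] wnz by blast
  have GD: "G Td" using mem(4) Gamma_tau G_zero tauM_zero by (auto simp: Ta_Tb_Tc_Td_def)
  show ?thesis
  proof (cases "b = (\<lambda>_. 0)")
    case True
    then have Tb0: "Tb = 0" by (simp add: Ta_Tb_Tc_Td_def tauM_zero)
    then have ad: "Ta * R Td = 1" using E1 by simp
    have "d \<noteq> (\<lambda>_. 0)"
    proof
      assume "d = (\<lambda>_. 0)"
      then have "Td = 0" by (simp add: Ta_Tb_Tc_Td_def tauM_zero)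
      then show False using ad by (simp add: R_zero)
    qed
    then have "d \<in> clifford_group n" using mem(4) by auto
    then obtain Zd where Zd: "Td * Zd = 1" "Zd * Td = 1" using Gamma_tau by (auto simp: Ta_Tb_Tc_Td_def)
    have "tauM w = R Td" using W Tb0 by (simp add: R_zero)
    moreover have "R Td * R Zd = 1" using Zd by (simp add: R_mult[symmetric] R_one)
    moreover have "R Zd * R Td = 1" using Zd by (simp add: R_mult[symmetric] R_one)
    ultimately show ?thesis by auto
  next
    case False
    then have "b \<in> clifford_group n" using mem(2) by auto
    then obtain Bi where Bi: "G Bi" "Tb * Bi = 1" "Bi * Tb = 1" using Gamma_tau by (auto simp: Ta_Tb_Tc_Td_def)
    define Y where "Y = Td * Bi"
    have GY: "G Y" unfolding Y_def using G_mult[OF GD Bi(1)] .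
    have a1: "P * R Bi = Ta"
    proof -
      have "P * R Bi = Ta * R (Bi * Tb)" by (simp add: P_def R_mult mult.assoc)
      then show ?thesis using Bi by (simp add: R_one)
    qed
    have b1: "R Tc = Bi * Ta * R Td - Bi"
    proof -
      have "Tb * R Tc = Ta * R Td - 1" using E1 by (simp add: algebra_simps)
      then have "Bi * (Tb * R Tc) = Bi * (Ta * R Td - 1)" by simp
      then show ?thesis using Bi by (simp add: mult.assoc[symmetric] right_diff_distrib)
    qed
    have c1: "Tc = Td * R Ta * R Bi - R Bi"
    proof -
      have "Tc = R (R Tc)" by (simp add: R_R)
      also have "\<dots> = R (R Td) * R Ta * R Bi - R Bi" unfolding b1 by (simp add: R_diff R_mult mult.assoc)
      finally show ?thesis by (simp add: R_R)
    qed
    have d1: "R Ta = Bi * P"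
    proof -
      have "R Ta = R (R Bi) * R P" unfolding a1[symmetric] by (simp add: R_mult)
      then show ?thesis using R_pv[OF pvP] by (simp add: R_R)
    qed
    have RY: "R Y = R Bi * R Td" unfolding Y_def by (simp add: R_mult)
    have e1: "Q = Y * P * R Y - R Y"
    proof -
      have "Q = (Td * (Bi * P) * R Bi - R Bi) * R Td" unfolding Q_def c1 d1 ..
      also have "\<dots> = Y * P * R Y - R Y" by (simp add: Y_def R_mult left_diff_distrib mult.assoc)
      finally show ?thesis .
    qed
    have pvRY: "pv (R Y)"
    proof -
      have "R Y = Y * P * R Y - Q" using e1 by simp
      then show ?thesis using pv_diff[OF G_conj[OF GY pvP] pvQ] by simp
    qed
    have f1: "R Tb * R Y = R Td"
    proof -
      have "R Tb * R Y = R (Td * (Bi * Tb))" by (simp add: Y_def R_mult mult.assoc)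
      then show ?thesis using Bi by simp
    qed
    have W2: "tauM w = R Tb * (R Y - tauM x)"
      using W f1 by (simp add: right_diff_distrib)
    have pvD: "pv (R Y - tauM x)" using pv_diff[OF pvRY pvX] .
    have "R Y - tauM x \<noteq> 0" using Wnz W2 by auto
    then obtain q where q: "(R Y - tauM x) * q = 1" "q * (R Y - tauM x) = 1" using pv_inv[OF pvD] by blast
    have i1: "R Tb * R Bi = 1" using Bi by (simp add: R_mult[symmetric] R_one)
    have i2: "R Bi * R Tb = 1" using Bi by (simp add: R_mult[symmetric] R_one)
    have "tauM w * (q * R Bi) = 1"
    proof -
      have "tauM w * (q * R Bi) = R Tb * ((R Y - tauM x) * q) * R Bi" unfolding W2 by (simp add: mult.assoc)
      then show ?thesis using q i1 by simp
    qed
    moreover have "(q * R Bi) * tauM w = 1"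
    proof -
      have "(q * R Bi) * tauM w = q * (R Bi * R Tb) * (R Y - tauM x)" unfolding W2 by (simp add: mult.assoc)
      then show ?thesis using q i2 by simp
    qed
    ultimately show ?thesis by blast
  qed
qed
end

lemma mat_mul_entry: "(mat k ** (A::complex^'n^'n)) $ i $ j = k * A $ i $ j"
  by (simp add: matrix_matrix_mult_def mat_def if_distrib if_distribR sum.delta' cong: if_cong)

lemma mat_of_real_mul: "mat (complex_of_real r) ** (A::complex^'n^'n) = r *\<^sub>R A"
  by (simp add: vec_eq_iff mat_mul_entry; simp add: scaleR_conv_of_real)

lemma rep_of_real: "rep (of_real r :: 'a::finite sqm) = mat (complex_of_real r)"
proof -
  have "rep (of_real r :: 'a sqm) = r *\<^sub>R rep (1::'a sqm)" unfolding of_real_def by (rule rep_scaleR)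
  also have "\<dots> = mat (complex_of_real r)" by (simp add: rep_one vec_eq_iff mat_def; simp add: scaleR_conv_of_real)
  finally show ?thesis .
qed

lemma rep_minus: "rep (- x) = - rep x" by transfer simp

lemma matrix_inv_eq: assumes "(A::complex^'n^'n) ** B = mat 1" "B ** A = mat 1" shows "matrix_inv A = B"
proof -
  have ex: "\<exists>A'. A ** A' = mat 1 \<and> A' ** A = mat 1" using assms by blast
  let ?C = "matrix_inv A"
  have C: "A ** ?C = mat 1 \<and> ?C ** A = mat 1" unfolding matrix_inv_def by (rule someI_ex[OF ex])
  have "?C = ?C ** (A ** B)" using assms by simp
  also have "\<dots> = (?C ** A) ** B" by (simp add: matrix_mul_assoc)
  also have "\<dots> = B" using C by simp
  finally show ?thesis .
qed

lemma inv_rep: assumes "Y * Z = 1" "Z * Y = 1" shows "matrix_inv (rep Y) = rep Z"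
  using assms by (intro matrix_inv_eq) (simp_all add: rep_mult[symmetric] rep_one[symmetric])

lemma mv_scale: "(A::complex^'n^'n) *v (k *s v) = k *s (A *v v)"
  by (simp add: vec_eq_iff matrix_vector_mult_def sum_distrib_left mult.left_commute)

lemma rep_foldr: "rep (foldr (\<lambda>j M. abs (E 1) * abs (E j) * M) xs 1) =
    foldr (\<lambda>j M. (E 1 ** E j) ** M) xs (mat 1)"
  by (induction xs) (simp_all add: rep_mult rep_one abs_inverse)

theorem mainTheorem7:
  fixes n :: nat and E :: "nat \<Rightarrow> complex^'m::finite^'m" and lam :: complex
    and g :: "mv \<times> mv \<times> mv \<times> mv" and f :: "mv \<Rightarrow> complex^'m" and x :: mv
  assumes "n \<ge> 2"
    and "\<And>i. i \<in> {1..n} \<Longrightarrow> cadj (E i) = - E i"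
    and "\<And>i j. i \<in> {1..n} \<Longrightarrow> j \<in> {1..n} \<Longrightarrow>
           E i ** E j + E j ** E i = mat (if i = j then -2 else 0)"
    and "g \<in> SL2_Gamma n"
    and "x \<in> vecs n"
  shows "E 1 *v pi'_rep n E lam g f x = pi_rep n E lam g (\<lambda>y. E 1 *v f y) x"
proof -
  define e where "e i = (abs (E i) :: 'm sqm)" for i
  have repe: "rep (e i) = E i" for i by (simp add: e_def abs_inverse)
  interpret C: cliff n e
  proof
    show "2 \<le> n" using assms(1) .
    fix i j assume i: "i \<in> {1..n}" and j: "j \<in> {1..n}"
    have "rep (e i * e j + e j * e i) = rep (of_real (if i = j then -2 else 0))"
      using assms(3)[OF i j] by (simp add: rep_add rep_mult repe rep_of_real)
    then show "e i * e j + e j * e i = (if i = j then -2 else 0)"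
      by (simp add: rep_inject split: if_splits)
  next
    fix i assume i: "i \<in> {1..n}"
    have "rep (ccadj (e i)) = rep (- e i)" using assms(2)[OF i] by (simp add: ccadj.rep_eq repe rep_minus)
    then show "ccadj (e i) = - e i" by (simp add: rep_inject)
  qed
  have tau_rep: "tau n E a = rep (C.tauM a)" for a
  proof -
    have "rep (C.tauM a) = (\<Sum>A\<in>Pow {2..n}. a A *\<^sub>R rep (C.T A))"
      unfolding C.tauM_def by (simp add: rep_sum rep_scaleR)
    moreover have "rep (C.T A) = foldr (\<lambda>j M. (E 1 ** E j) ** M) (sorted_list_of_set A) (mat 1)" for A
      unfolding C.T_def C.X_def e_def by (rule rep_foldr)
    ultimately show ?thesis unfolding tau_def by (simp add: mat_of_real_mul)
  qed
  have tau'_rep: "tau' n E a = rep (C.eps * C.tauM a * (- C.eps))" for a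
    unfolding tau'_def tau_rep C.tauM_prin ..
  obtain a b c d where g: "g = (a, b, c, d)" by (cases g)
  define w where "w = cl_sub (cl_rev d) (cl_mult n (cl_rev b) x)"
  define y where "y = cl_mult n (cl_add (cl_neg (cl_rev c)) (cl_mult n (cl_rev a) x)) (cl_inv n w)"
  define k where "k = complex_of_real (cl_norm n w) powr (- 2 * lam - of_nat n)"
  define u where "u = cl_scale (1 / cl_norm n w) w"
  show ?thesis
  proof (cases "w = (\<lambda>_. 0)")
    case True
    then show ?thesis
      by (simp add: pi_rep_def pi'_rep_def pi_gen_def g w_def[symmetric] Let_def)
  next
    case False
    have dCL: "d \<in> CL n"
      using assms(4) g C.Gamma_CL C.zero_CL unfolding SL2_Gamma_def by auto
    have wCL: "w \<in> CL n" unfolding w_def using dCL by (intro C.cl_sub_CL C.cl_rev_CL C.cl_mult_CL)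
    obtain A where A: "w A \<noteq> 0" using False by auto
    then have Ap: "A \<in> Pow {2..n}" using wCL unfolding CL_def by auto
    have "(\<Sum>A\<in>Pow {2..n}. (w A)^2) > 0"
      using A Ap by (intro sum_pos2[of _ A]) auto
    then have N: "cl_norm n w > 0" unfolding cl_norm_def by simp
    obtain Z where Z: "C.tauM w * Z = 1" "Z * C.tauM w = 1"
      using C.key[of a b c d x w] assms(4,5) g w_def False by auto
    define Zu where "Zu = cl_norm n w *\<^sub>R Z"
    have tu: "C.tauM u = (1 / cl_norm n w) *\<^sub>R C.tauM w" unfolding u_def by (simp add: C.tauM_scale)
    have Zu1: "C.tauM u * Zu = 1" "Zu * C.tauM u = 1" using Z N by (simp_all add: tu Zu_def)
    have inv1: "matrix_inv (tau n E u) = rep Zu" unfolding tau_rep by (rule inv_rep[OF Zu1])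
    have inv2: "matrix_inv (tau' n E u) = rep (C.eps * Zu * (- C.eps))"
    proof -
      have "(C.eps * C.tauM u * (- C.eps)) * (C.eps * Zu * (- C.eps)) =
          C.eps * C.tauM u * (C.eps * C.eps) * Zu * C.eps" by (simp add: mult.assoc)
      also have "\<dots> = 1" using Zu1 C.eps2 by (simp add: mult.assoc)
      finally have 1: "(C.eps * C.tauM u * (- C.eps)) * (C.eps * Zu * (- C.eps)) = 1" .
      have "(C.eps * Zu * (- C.eps)) * (C.eps * C.tauM u * (- C.eps)) =
          C.eps * Zu * (C.eps * C.eps) * C.tauM u * C.eps" by (simp add: mult.assoc)
      also have "\<dots> = 1" using Zu1 C.eps2 by (simp add: mult.assoc)
      finally have 2: "(C.eps * Zu * (- C.eps)) * (C.eps * C.tauM u * (- C.eps)) = 1" .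
      show ?thesis unfolding tau'_rep by (rule inv_rep[OF 1 2])
    qed
    have key2: "E 1 ** rep (C.eps * Zu * (- C.eps)) = rep Zu ** E 1"
    proof -
      have "E 1 ** rep (C.eps * Zu * (- C.eps)) = rep (C.eps * (C.eps * Zu * (- C.eps)))"
        by (simp only: rep_mult repe)
      also have "C.eps * (C.eps * Zu * (- C.eps)) = - ((C.eps * C.eps) * Zu * C.eps)"
        by (simp add: mult.assoc)
      also have "\<dots> = Zu * C.eps" using C.eps2 by simp
      finally show ?thesis by (simp add: rep_mult repe)
    qed
    have P1: "pi'_rep n E lam g f x = k *s (matrix_inv (tau' n E u) *v f y)"
      unfolding pi'_rep_def pi_gen_def g prod.case Let_def w_def[symmetric] y_def[symmetric]
        k_def[symmetric] u_def[symmetric] using False by simp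
    have P2: "pi_rep n E lam g (\<lambda>y. E 1 *v f y) x = k *s (matrix_inv (tau n E u) *v (E 1 *v f y))"
      unfolding pi_rep_def pi_gen_def g prod.case Let_def w_def[symmetric] y_def[symmetric]
        k_def[symmetric] u_def[symmetric] using False by simp
    show ?thesis unfolding P1 P2
      by (simp only: mv_scale inv1 inv2 matrix_vector_mul_assoc key2)
  qed
qed

end
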